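(* Let $H$ be a real Hilbert space, $I=\{1,\dots,M\}$, let $f_i,h_i,T_i$ ($i\in I$) satisfy Assumption (A1)–(A4) and the parameters satisfy Condition (C) (described below). Consider the sequences generated by the Distributed Accelerated Parallel Algorithm below, and assume that for each $i\in I$ the sequence $\{y^{(i)}_n\}$ is bounded. Then the sequences $\{T_i(y^{(i)}_n)\}$, $\{x_n\}$, $\{w^{(i)}_n\}$, $\{z_n\}$ and $\{d^{(i)}_n\}$ ($i\in I$) are bounded.
   Context: Assumption (A1): each $f_i:H\to\mathbb{R}$ is continuous and convex. (A2): each $h_i:H\to\mathbb{R}$ is convex and Fréchet differentiable, and $\nabla h_i$ is $(1/L_i)$-Lipschitz continuous for some $L_i>0$. (A3): each $T_i:H\to H$ is firmly nonexpansive, i.e. $\|T_ix-T_iy\|^2\le\langle T_ix-T_iy,x-y\rangle$ for all $x,y$. (A4): $S=\bigcap_{i=1}^M\mathrm{Fix}\,T_i\neq\emptyset$ and, with $\psi=\sum_{i=1}^M(f_i+h_i)$, $\Omega=\{\hat x\in S:\psi(\hat x)=\min_{x\in S}\psi(x)\}\neq\emptyset$. Condition (C): $\{\theta_n\},\{\lambda_n\},\{\beta_n\},\{\alpha_n\}$ are decreasing real sequences converging to $0$ with $\theta_n\in[0,1)$, $\lambda_n\in(0,2\min_{i\in I}L_i]$, $\beta_n\in(0,1]$, $\alpha_n\in(0,1]$, and: (C1) $\sum_n\alpha_n=\infty$; (C2) $\lim_n\frac{1}{\alpha_{n+1}}\big|\frac{1}{\lambda_{n+1}}-\frac{1}{\lambda_n}\big|=0$;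 (C3) $\lim_n\frac{1}{\lambda_{n+1}}\big|1-\frac{\alpha_n}{\alpha_{n+1}}\big|=0$; (C4) $\lim_n\frac{\alpha_n}{\lambda_n}=0$; (C5) $\lim_n\frac{\theta_n}{\alpha_{n+1}\lambda_{n+1}}=0$; (C6) $\frac{\lambda_n}{\lambda_{n+1}}\le\sigma$ for some $\sigma\ge1$; (C7) $\lim_n\frac{\beta_n}{\alpha_{n+1}}=0$. $\mathrm{prox}_{\lambda g}(x)=\arg\min_y\{g(y)+\frac{1}{2\lambda}\|x-y\|^2\}$. Distributed Accelerated Parallel Algorithm: choose $z_0,x_0,x_1\in H$, $u^{(i)}\in H$ and set $d^{(i)}_1=-\nabla h_i(z_0)$ ($i\in I$). For $n=1,2,\dots$: compute $z_n=x_n+\theta_n(x_n-x_{n-1})$; for $i=1,\dots,M$ compute $d^{(i)}_{n+1}=-\nabla h_i(z_n)+\beta_nd^{(i)}_n$, $y^{(i)}_n=\mathrm{prox}_{\lambda_nf_i}(z_n+\lambda_nd^{(i)}_{n+1})$, $w^{(i+1)}_n=\alpha_nu^{(i)}+(1-\alpha_n)T_i(y^{(i)}_n)$; then set $x_{n+1}=\frac1M\sum_{i=1}^Mw^{(i+1)}_n$. *)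

theory Defs
  imports "HOL-Analysis.Analysis"
begin

definition prox :: "real \<Rightarrow> ('a::real_normed_vector \<Rightarrow> real) \<Rightarrow> 'a \<Rightarrow> 'a" where
  "prox lam g x = (THE y. \<forall>v. g y + (1 / (2 * lam)) * (norm (x - y))\<^sup>2
                              \<le> g v + (1 / (2 * lam)) * (norm (x - v))\<^sup>2)"

definition firmly_nonexpansive :: "('a::real_inner \<Rightarrow> 'a) \<Rightarrow> bool" where
  "firmly_nonexpansive T \<longleftrightarrow>
     (\<forall>x y. (norm (T x - T y))\<^sup>2 \<le> inner (T x - T y) (x - y))"

end

theory Submission
  imports Defs
begin

lemma fne_nonexp:
  fixes T :: "'a::real_inner \<Rightarrow> 'a"
  assumes "firmly_nonexpansive T"
  shows "norm (T a - T b) \<le> norm (a - b)"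
proof -
  have h: "(norm (T a - T b))\<^sup>2 \<le> norm (T a - T b) * norm (a - b)"
    using assms norm_cauchy_schwarz[of "T a - T b" "a - b"]
    unfolding firmly_nonexpansive_def by (meson order_trans)
  show ?thesis
  proof (cases "norm (T a - T b) = 0")
    case True then show ?thesis by simp
  next
    case False
    then have "norm (T a - T b) > 0" by simp
    with h show ?thesis by (simp add: power2_eq_square)
  qed
qed

lemma bdd_from: "(\<And>n. P n \<Longrightarrow> norm (g n) \<le> (B::real)) \<Longrightarrow> bounded {g n | n. P n}"
  unfolding bounded_iff by blast

theorem lemma5:
  fixes M :: nat
    and f h :: "nat \<Rightarrow> 'a::{real_inner, complete_space} \<Rightarrow> real"
    and gh :: "nat \<Rightarrow> 'a \<Rightarrow> 'a"
    and L :: "nat \<Rightarrow> real"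
    and T :: "nat \<Rightarrow> 'a \<Rightarrow> 'a"
    and \<theta> lam \<beta> \<alpha> :: "nat \<Rightarrow> real"
    and u :: "nat \<Rightarrow> 'a"
    and x z :: "nat \<Rightarrow> 'a"
    and d y w :: "nat \<Rightarrow> nat \<Rightarrow> 'a"
  assumes M: "M \<ge> 1"
    \<comment> \<open>(A1)\<close>
    and A1: "\<And>i. i \<in> {1..M} \<Longrightarrow> continuous_on UNIV (f i) \<and> convex_on UNIV (f i)"
    \<comment> \<open>(A2): gh i is the gradient of h i, (1/L i)-Lipschitz\<close>
    and A2_convex: "\<And>i. i \<in> {1..M} \<Longrightarrow> convex_on UNIV (h i)"
    and A2_grad: "\<And>i p. i \<in> {1..M} \<Longrightarrow> (h i has_derivative (\<lambda>v. inner (gh i p) v)) (at p)"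
    and A2_L: "\<And>i. i \<in> {1..M} \<Longrightarrow> L i > 0"
    and A2_lip: "\<And>i p q. i \<in> {1..M} \<Longrightarrow> norm (gh i p - gh i q) \<le> (1 / L i) * norm (p - q)"
    \<comment> \<open>(A3)\<close>
    and A3: "\<And>i. i \<in> {1..M} \<Longrightarrow> firmly_nonexpansive (T i)"
    \<comment> \<open>(A4)\<close>
    and A4_S: "(\<Inter>i\<in>{1..M}. {p. T i p = p}) \<noteq> {}"
    and A4_Omega: "\<exists>xh \<in> (\<Inter>i\<in>{1..M}. {p. T i p = p}).
        \<forall>p \<in> (\<Inter>i\<in>{1..M}. {p. T i p = p}).
          (\<Sum>i=1..M. f i xh + h i xh) \<le> (\<Sum>i=1..M. f i p + h i p)"
    \<comment> \<open>Condition (C)\<close>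
    and dec: "decseq \<theta>" "decseq lam" "decseq \<beta>" "decseq \<alpha>"
    and lim0: "\<theta> \<longlonglongrightarrow> 0" "lam \<longlonglongrightarrow> 0" "\<beta> \<longlonglongrightarrow> 0" "\<alpha> \<longlonglongrightarrow> 0"
    and \<theta>_range: "\<And>n. 0 \<le> \<theta> n \<and> \<theta> n < 1"
    and lam_range: "\<And>n. 0 < lam n \<and> lam n \<le> 2 * Min (L ` {1..M})"
    and \<beta>_range: "\<And>n. 0 < \<beta> n \<and> \<beta> n \<le> 1"
    and \<alpha>_range: "\<And>n. 0 < \<alpha> n \<and> \<alpha> n \<le> 1"
    and C1: "\<not> summable \<alpha>"
    and C2: "(\<lambda>n. (1 / \<alpha> (n+1)) * \<bar>1 / lam (n+1) - 1 / lam n\<bar>) \<longlonglongrightarrow> 0"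
    and C3: "(\<lambda>n. (1 / lam (n+1)) * \<bar>1 - \<alpha> n / \<alpha> (n+1)\<bar>) \<longlonglongrightarrow> 0"
    and C4: "(\<lambda>n. \<alpha> n / lam n) \<longlonglongrightarrow> 0"
    and C5: "(\<lambda>n. \<theta> n / (\<alpha> (n+1) * lam (n+1))) \<longlonglongrightarrow> 0"
    and C6: "\<exists>\<sigma>\<ge>1. \<forall>n. lam n / lam (n+1) \<le> \<sigma>"
    and C7: "(\<lambda>n. \<beta> n / \<alpha> (n+1)) \<longlonglongrightarrow> 0"
    \<comment> \<open>Algorithm (w n i stands for w^{(i+1)}_n)\<close>
    and d1: "\<And>i. i \<in> {1..M} \<Longrightarrow> d 1 i = - gh i (z 0)"
    and z_def: "\<And>n. n \<ge> 1 \<Longrightarrow> z n = x n + \<theta> n *\<^sub>R (x n - x (n - 1))"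
    and d_def: "\<And>n i. n \<ge> 1 \<Longrightarrow> i \<in> {1..M} \<Longrightarrow>
                  d (n+1) i = - gh i (z n) + \<beta> n *\<^sub>R d n i"
    and y_def: "\<And>n i. n \<ge> 1 \<Longrightarrow> i \<in> {1..M} \<Longrightarrow>
                  y n i = prox (lam n) (f i) (z n + lam n *\<^sub>R d (n+1) i)"
    and w_def: "\<And>n i. n \<ge> 1 \<Longrightarrow> i \<in> {1..M} \<Longrightarrow>
                  w n i = \<alpha> n *\<^sub>R u i + (1 - \<alpha> n) *\<^sub>R T i (y n i)"
    and x_def: "\<And>n. n \<ge> 1 \<Longrightarrow> x (n+1) = (1 / real M) *\<^sub>R (\<Sum>i=1..M. w n i)"
    \<comment> \<open>boundedness of the y-sequences\<close>
    and y_bdd: "\<And>i. i \<in> {1..M} \<Longrightarrow> bounded {y n i | n. n \<ge> 1}"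
  shows "(\<forall>i\<in>{1..M}. bounded {T i (y n i) | n. n \<ge> 1})
       \<and> bounded (range x)
       \<and> (\<forall>i\<in>{1..M}. bounded {w n i | n. n \<ge> 1})
       \<and> bounded (range z)
       \<and> (\<forall>i\<in>{1..M}. bounded {d n i | n. n \<ge> 1})"
  proof -
  obtain p where p: "\<And>i. i \<in> {1..M} \<Longrightarrow> T i p = p" using A4_S by blast
  have "\<forall>i\<in>{1..M}. \<exists>b. \<forall>n\<ge>1. norm (y n i) \<le> b"
  proof
    fix i assume "i \<in> {1..M}"
    from y_bdd[OF this] obtain b where "\<forall>v\<in>{y n i | n. n \<ge> 1}. norm v \<le> b"
      unfolding bounded_iff by blast
    then show "\<exists>b. \<forall>n\<ge>1. norm (y n i) \<le> b" by blast
  qed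
  from bchoice[OF this] obtain B where B0: "\<forall>i\<in>{1..M}. \<forall>n\<ge>1. norm (y n i) \<le> B i"
    by blast
  then have B: "\<And>i n. i \<in> {1..M} \<Longrightarrow> n \<ge> 1 \<Longrightarrow> norm (y n i) \<le> B i" by blast
  have Tb: "norm (T i (y n i)) \<le> B i + 2 * norm p" if i: "i \<in> {1..M}" and n: "n \<ge> 1" for i n
  proof -
    have "norm (T i (y n i) - T i p) \<le> norm (y n i - p)" using fne_nonexp[OF A3[OF i]] .
    then have "norm (T i (y n i) - p) \<le> norm (y n i) + norm p"
      using p[OF i] norm_triangle_ineq4[of "y n i" p] by simp
    then show ?thesis using B[OF i n] norm_triangle_ineq[of "T i (y n i) - p" p] by simp
  qed
  define W where "W i = norm (u i) + B i + 2 * norm p" for i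
  have Wb: "norm (w n i) \<le> W i" if i: "i \<in> {1..M}" and n: "n \<ge> 1" for i n
  proof -
    have a: "0 < \<alpha> n" "\<alpha> n \<le> 1" using \<alpha>_range by auto
    have "norm (w n i) \<le> \<alpha> n * norm (u i) + (1 - \<alpha> n) * norm (T i (y n i))"
      using w_def[OF n i] a norm_triangle_ineq[of "\<alpha> n *\<^sub>R u i" "(1 - \<alpha> n) *\<^sub>R T i (y n i)"]
      by simp
    also have "\<dots> \<le> \<alpha> n * norm (u i) + (1 - \<alpha> n) * (B i + 2 * norm p)"
      using Tb[OF i n] a by (intro add_left_mono mult_left_mono) auto
    also have "\<dots> \<le> W i"
    proof -
      have "0 \<le> B i + 2 * norm p" using Tb[OF i n] norm_ge_zero order_trans by blast
      moreover have "\<alpha> n * norm (u i) \<le> norm (u i)"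
        using a by (intro mult_left_le_one_le) auto
      moreover have "(1 - \<alpha> n) * (B i + 2 * norm p) \<le> B i + 2 * norm p"
        using a calculation(1) by (intro mult_left_le_one_le) auto
      ultimately show ?thesis unfolding W_def by linarith
    qed
    finally show ?thesis .
  qed
  define Xb where "Xb = (1 / real M) * (\<Sum>i=1..M. W i)"
  have xb: "norm (x (n+1)) \<le> Xb" if n: "n \<ge> 1" for n
  proof -
    have "norm (x (n+1)) = (1 / real M) * norm (\<Sum>i=1..M. w n i)"
      using x_def[OF n] M by simp
    also have "\<dots> \<le> (1 / real M) * (\<Sum>i=1..M. norm (w n i))"
      using M by (intro mult_left_mono norm_sum) auto
    also have "\<dots> \<le> Xb" unfolding Xb_def using M Wb[OF _ n]
      by (intro mult_left_mono sum_mono) auto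
    finally show ?thesis .
  qed
  define X where "X = max Xb (max (norm (x 0)) (norm (x 1)))"
  have X: "norm (x n) \<le> X" for n
  proof (cases "n \<ge> 2")
    case True
    then obtain m where "n = m + 1" "m \<ge> 1" by (intro that[of "n - 1"]) auto
    then show ?thesis using xb[of m] unfolding X_def by auto
  next
    case False
    then have "n = 0 \<or> n = 1" by auto
    then show ?thesis unfolding X_def by auto
  qed
  have X0: "0 \<le> X" using X[of 0] norm_ge_zero order_trans by blast
  define Z where "Z = max (norm (z 0)) (3 * X)"
  have Zb: "norm (z n) \<le> Z" for n
  proof (cases "n \<ge> 1")
    case True
    have t: "0 \<le> \<theta> n" "\<theta> n < 1" using \<theta>_range by auto
    have "norm (z n) \<le> norm (x n) + \<theta> n * norm (x n - x (n - 1))"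
      using z_def[OF True] t norm_triangle_ineq[of "x n" "\<theta> n *\<^sub>R (x n - x (n - 1))"] by simp
    also have "\<dots> \<le> X + 1 * (X + X)"
    proof -
      have "norm (x n - x (n - 1)) \<le> X + X"
        using X[of n] X[of "n-1"] norm_triangle_ineq4[of "x n" "x (n - 1)"] by simp
      then have "\<theta> n * norm (x n - x (n - 1)) \<le> 1 * (X + X)"
        using t X0 by (intro mult_mono) auto
      then show ?thesis using X[of n] by simp
    qed
    finally show ?thesis unfolding Z_def by simp
  next
    case False then have "n = 0" by simp
    then show ?thesis unfolding Z_def by simp
  qed
  have D: "bounded {d n i | n. n \<ge> 1}" if i: "i \<in> {1..M}" for i
  proof -
    define K where "K = norm (gh i 0) + (1 / L i) * Z"
    have Kb: "norm (gh i (z n)) \<le> K" for n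
    proof -
      have "norm (gh i (z n) - gh i 0) \<le> (1 / L i) * norm (z n)" using A2_lip[OF i, of "z n" 0] by simp
      also have "\<dots> \<le> (1 / L i) * Z" using Zb[of n] A2_L[OF i] by (intro mult_left_mono) auto
      finally show ?thesis unfolding K_def using norm_triangle_ineq[of "gh i (z n) - gh i 0" "gh i 0"]
        by simp
    qed
    have K0: "0 \<le> K" using Kb[of 0] norm_ge_zero order_trans by blast
    have "\<forall>\<^sub>F n in sequentially. \<beta> n < 1/2" using order_tendstoD(2)[OF lim0(3), of "1/2"]
      by simp
    then obtain N where N: "\<And>n. n \<ge> N \<Longrightarrow> \<beta> n < 1/2" unfolding eventually_sequentially by blast
    define C where "C = (\<Sum>k=1..N+1. norm (d k i)) + 2 * K"
    have "norm (d n i) \<le> C" if "n \<ge> 1" for n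
      using that
    proof (induction n rule: dec_induct)
      case base
      have "norm (d 1 i) \<le> (\<Sum>k=1..N+1. norm (d k i))"
        by (intro member_le_sum) auto
      then show ?case unfolding C_def using K0 by simp
    next
      case (step m)
      show ?case
      proof (cases "m + 1 \<le> N + 1")
        case True
        have "norm (d (m+1) i) \<le> (\<Sum>k=1..N+1. norm (d k i))"
          using True by (intro member_le_sum) auto
        then show ?thesis unfolding C_def using K0 by simp
      next
        case False
        then have bm: "0 < \<beta> m" "\<beta> m < 1/2" using N[of m] \<beta>_range[of m] by auto
        have "norm (d (m+1) i) \<le> norm (gh i (z m)) + \<beta> m * norm (d m i)"
          using d_def[OF step(1) i] bm norm_triangle_ineq[of "- gh i (z m)" "\<beta> m *\<^sub>R d m i"] by simp
        also have "\<dots> \<le> K + (1/2) * C"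
          using Kb[of m] step(3) bm by (intro add_mono mult_mono) auto
        also have "\<dots> \<le> C"
        proof -
          have "0 \<le> (\<Sum>k=1..N+1. norm (d k i))" by (intro sum_nonneg) auto
          then show ?thesis unfolding C_def by simp
        qed
        finally show ?thesis by simp
      qed
    qed
    then show ?thesis by (intro bdd_from) auto
  qed
  show ?thesis
  proof (intro conjI ballI)
    fix i assume i: "i \<in> {1..M}"
    show "bounded {T i (y n i) | n. n \<ge> 1}" using Tb[OF i] by (intro bdd_from) auto
    show "bounded {w n i | n. n \<ge> 1}" using Wb[OF i] by (intro bdd_from) auto
    show "bounded {d n i | n. n \<ge> 1}" using D[OF i] .
  next
    show "bounded (range x)" unfolding bounded_iff using X by blast
    show "bounded (range z)" unfolding bounded_iff using Zb by blast
  qed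
qed

end
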